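(* Consider any sequences evolved by Algorithm 1 and assume there is $\underline\lambda>0$ with $\lambda_k\ge\underline\lambda$ for all $k\ge1$. Let $d_0:=\|x^*-x^0\|$ and $\alpha:=\sqrt{\frac{\mu\underline\lambda}{1+\mu\underline\lambda}}\in(0,1)$. Then: (a) for all $k\ge1$, $h(y^k)-h(x^* )\le\frac{d_0^2}{2\underline\lambda}(1-\alpha)^{k-1}$ and $\max\{\|x^*-y^k\|,\|x^*-x^k\|\}\le\frac{d_0}{\sqrt{\mu\underline\lambda}}(1-\alpha)^{(k-1)/2}$; (b) for all $k\ge1$, $v^{k+1}\in\partial_{\varepsilon_{k+1}}f(y^{k+1})+\partial g(y^{k+1})$, $\|v^{k+1}\|\le\frac{\sqrt6\,\big(1+\sigma\sqrt{1+\mu\underline\lambda}\big)}{\mu^{1/2}\underline\lambda^{3/2}}\,d_0\,(1-\alpha)^{(k-1)/2}$, and $\varepsilon_{k+1}\le\frac{3\sigma^2d_0^2}{\mu\underline\lambda^2}(1-\alpha)^{k-1}$.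
   Context: Setting: $\mathcal H$ is a finite-dimensional real inner product space with inner product $\langle\cdot,\cdot\rangle$ and norm $\|\cdot\|$. $f,g:\mathcal H\to(-\infty,\infty]$ are proper, closed, convex functions, $h:=f+g$ has nonempty domain, and $g$ is $\mu$-strongly convex for some $\mu>0$, i.e. $g(tx+(1-t)y)\le tg(x)+(1-t)g(y)-\frac{\mu}{2}t(1-t)\|x-y\|^2$ for all $x,y\in\mathcal H$, $t\in[0,1]$. $x^*$ denotes the unique minimizer of $h$. For $\varepsilon\ge 0$, $\partial_\varepsilon f(y):=\{u\in\mathcal H: f(w)\ge f(y)+\langle u,w-y\rangle-\varepsilon\ \forall w\in\mathcal H\}$, and $\partial g:=\partial_0 g$. Algorithm 1: Choose $x^0,y^0\in\mathcal H$ and $\sigma\in[0,1]$, and set $A_0=0$. For $k=0,1,2,\dots$: choose $\lambda_{k+1}>0$, set $a_{k+1}=\frac{(1+2\mu A_k)\lambda_{k+1}+\sqrt{(1+2\mu A_k)^2\lambda_{k+1}^2+4(1+\mu A_k)A_k\lambda_{k+1}}}{2}$ and $\tilde x^k=\frac{a_{k+1}-\mu A_k\lambda_{k+1}}{A_k+a_{k+1}}x^k+\frac{A_k+\mu A_k\lambda_{k+1}}{A_k+a_{k+1}}y^k$; compute $(y^{k+1},v^{k+1},\varepsilon_{k+1})\in\mathcal H\times\mathcal H\times[0,\infty)$ such that $v^{k+1}\in\partial_{\varepsilon_{k+1}}f(y^{k+1})+\partial g(y^{k+1})$ and $\frac{\|\lambda_{k+1}v^{k+1}+y^{k+1}-\tilde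 x^k\|^2}{1+\lambda_{k+1}\mu}+2\lambda_{k+1}\varepsilon_{k+1}\le\sigma^2\|y^{k+1}-\tilde x^k\|^2$; then set $A_{k+1}=A_k+a_{k+1}$ and $x^{k+1}=\frac{1+\mu A_k}{1+\mu A_{k+1}}x^k+\frac{\mu a_{k+1}}{1+\mu A_{k+1}}y^{k+1}-\frac{a_{k+1}}{1+\mu A_{k+1}}v^{k+1}$. "Sequences evolved by Algorithm 1" means any sequences satisfying all these relations for every $k\ge 0$. *)

theory Defs
  imports "HOL-Analysis.Analysis"
begin

definition proper_fun :: "('a \<Rightarrow> ereal) \<Rightarrow> bool" where
  "proper_fun f \<longleftrightarrow> (\<forall>x. f x \<noteq> -\<infinity>) \<and> (\<exists>x. f x \<noteq> \<infinity>)"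

text \<open>closed = lower semicontinuous = closed epigraph\<close>
definition closed_fun :: "('a::topological_space \<Rightarrow> ereal) \<Rightarrow> bool" where
  "closed_fun f \<longleftrightarrow> closed {(x, r::real). f x \<le> ereal r}"

definition convex_fun :: "('a::real_vector \<Rightarrow> ereal) \<Rightarrow> bool" where
  "convex_fun f \<longleftrightarrow> (\<forall>x y t. 0 \<le> t \<and> t \<le> 1 \<longrightarrow>
     f (t *\<^sub>R x + (1 - t) *\<^sub>R y) \<le> ereal t * f x + ereal (1 - t) * f y)"

definition strongly_convex_fun :: "real \<Rightarrow> ('a::real_normed_vector \<Rightarrow> ereal) \<Rightarrow> bool" where
  "strongly_convex_fun \<mu> f \<longleftrightarrow> (\<forall>x y t. 0 \<le> t \<and> t \<le> 1 \<longrightarrow>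
     f (t *\<^sub>R x + (1 - t) *\<^sub>R y) \<le> ereal t * f x + ereal (1 - t) * f y
        - ereal (\<mu> / 2 * t * (1 - t) * (norm (x - y))\<^sup>2))"

definition eps_subdiff :: "('a::real_inner \<Rightarrow> ereal) \<Rightarrow> real \<Rightarrow> 'a \<Rightarrow> 'a set" where
  "eps_subdiff f \<epsilon> y = {u. \<forall>w. f w \<ge> f y + ereal (inner u (w - y)) - ereal \<epsilon>}"

definition subdiff :: "('a::real_inner \<Rightarrow> ereal) \<Rightarrow> 'a \<Rightarrow> 'a set" where
  "subdiff f y = eps_subdiff f 0 y"

end

theory Submission
  imports Defs
begin
lemma L2poly:
  fixes z p q :: "'a::real_inner"
  shows "(b1+b2)*(b1 * (norm (z - p))\<^sup>2 + b2 * (norm (z-q))\<^sup>2) =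
    (norm ((b1+b2) *\<^sub>R z - b1 *\<^sub>R p - b2 *\<^sub>R q))\<^sup>2 + b1*b2 * (norm (p-q))\<^sup>2"
  unfolding power2_norm_eq_inner
  by (simp add: inner_simps inner_commute algebra_simps)
lemma L2:
  fixes z p q :: "'a::real_inner"
  assumes "b1 + b2 > 0"
  shows "b1 * (norm (z - p))\<^sup>2 + b2 * (norm (z-q))\<^sup>2 =
    (b1+b2) * (norm (z - (1/(b1+b2)) *\<^sub>R (b1 *\<^sub>R p + b2 *\<^sub>R q)))\<^sup>2 + b1*b2/(b1+b2) * (norm (p-q))\<^sup>2"
proof -
  define W where "W = z - (1/(b1+b2)) *\<^sub>R (b1 *\<^sub>R p + b2 *\<^sub>R q)"
  have e: "(b1+b2) *\<^sub>R z - b1 *\<^sub>R p - b2 *\<^sub>R q = (b1+b2) *\<^sub>R W"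
    using assms unfolding W_def by (simp add: scaleR_right_diff_distrib)
  have n: "(norm ((b1+b2) *\<^sub>R W))\<^sup>2 = (b1+b2)^2 * (norm W)\<^sup>2"
    by (simp add: power_mult_distrib)
  have "(b1+b2)*(b1 * (norm (z - p))\<^sup>2 + b2 * (norm (z-q))\<^sup>2) = (b1+b2) * ((b1+b2) * (norm W)\<^sup>2 + b1*b2/(b1+b2) * (norm (p-q))\<^sup>2)"
    unfolding L2poly e n using assms by (simp add: power2_eq_square field_simps)
  then show ?thesis using assms unfolding W_def by simp
qed


lemma Qbound:
  fixes u e v :: "'a::real_inner"
  assumes l: "l > 0" and mu: "mu > 0" and sig: "0 \<le> sig" "sig \<le> 1"
    and err: "(norm (l *\<^sub>R v - e))\<^sup>2 / (1 + l * mu) + 2 * l * eps \<le> sig\<^sup>2 * (norm e)\<^sup>2"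
  shows "eps \<le> inner v u + mu/2 * (norm u)\<^sup>2 + 1/(2*l) * (norm (u - e))\<^sup>2"
proof -
  have id: "(norm (u - e))\<^sup>2 + 2*l * inner v u = (norm (u - (e - l *\<^sub>R v)))\<^sup>2 + (norm e)\<^sup>2 - (norm (l *\<^sub>R v - e))\<^sup>2"
    unfolding power2_norm_eq_inner by (simp add: inner_simps inner_commute algebra_simps)
  have nq: "norm (0 - (e - l *\<^sub>R v)) = norm (l *\<^sub>R v - e)"
    by (metis diff_0 minus_diff_eq)
  have L: "l*mu * (norm (u - 0))\<^sup>2 + 1 * (norm (u - (e - l *\<^sub>R v)))\<^sup>2 \<ge> (l*mu)*1/(l*mu+1) * (norm (l *\<^sub>R v - e))\<^sup>2"
    using L2[of "l*mu" 1 u 0 "e - l *\<^sub>R v"] l mu nq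
    by (smt (verit, best) mult_nonneg_nonneg zero_le_power2)
  define N where "N = (norm (l *\<^sub>R v - e))\<^sup>2"
  have N0: "N \<ge> 0" unfolding N_def by simp
  have pos: "1 + l*mu > 0" using l mu by (simp add: add_pos_pos)
  have "(l*mu)/(l*mu+1) * N - N = - N/(1+l*mu)"
    using pos by (simp add: field_simps)
  have "2*l*(inner v u + mu/2 * (norm u)\<^sup>2 + 1/(2*l) * (norm (u - e))\<^sup>2)
      = l*mu*(norm u)\<^sup>2 + ((norm (u - e))\<^sup>2 + 2*l * inner v u)"
    using l by (simp add: field_simps)
  also have "\<dots> \<ge> (l*mu)/(l*mu+1) * N + (norm e)\<^sup>2 - N"
    using L id unfolding N_def by simp
  finally have "2*l*(inner v u + mu/2 * (norm u)\<^sup>2 + 1/(2*l) * (norm (u - e))\<^sup>2) \<ge> (norm e)\<^sup>2 - N/(1+l*mu)"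
    using \<open>(l*mu)/(l*mu+1) * N - N = - N/(1+l*mu)\<close> by linarith
  moreover have "sig\<^sup>2 * (norm e)\<^sup>2 \<le> (norm e)\<^sup>2"
    using sig by (simp add: mult_left_le_one_le power_le_one)
  ultimately have "2*l*(inner v u + mu/2 * (norm u)\<^sup>2 + 1/(2*l) * (norm (u - e))\<^sup>2) \<ge> 2*l*eps"
    using err unfolding N_def by linarith
  then show ?thesis using l by simp
qed



lemma Tlower:
  fixes x y yp v z xt :: "'a::real_inner"
  assumes mu: "mu > 0" and l: "l > 0" and A: "A \<ge> 0" and a: "a > 0"
    and rel: "a\<^sup>2 = l * ((1 + mu*A)*(A+a) + mu*A*a)"
    and sig: "0 \<le> sig" "sig \<le> 1"
    and xt: "xt = ((a - mu*A*l)/(A+a)) *\<^sub>R x + ((A + mu*A*l)/(A+a)) *\<^sub>R y"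
    and err: "(norm (l *\<^sub>R v + yp - xt))\<^sup>2 / (1 + l * mu) + 2 * l * eps \<le> sig\<^sup>2 * (norm (yp - xt))\<^sup>2"
  shows "(A+a) * eps \<le> A*(inner v (y-yp) + mu/2*(norm (y-yp))\<^sup>2) + a*(inner v (z-yp) + mu/2*(norm (z-yp))\<^sup>2)
           + (1+mu*A)/2*(norm (z-x))\<^sup>2"
proof -
  define A' where "A' = A + a"
  have A'p: "A' > 0" using A a unfolding A'_def by simp
  define w where "w = (1/A') *\<^sub>R (A *\<^sub>R y + a *\<^sub>R z)"
  have I1: "A*(inner v (y-yp)) + a*(inner v (z-yp)) = A' * inner v (w - yp)"
  proof -
    have "A' *\<^sub>R (w - yp) = A *\<^sub>R y + a *\<^sub>R z - A' *\<^sub>R yp"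
      using A'p unfolding w_def by (simp add: scaleR_right_diff_distrib)
    hence "A' * inner v (w - yp) = inner v (A *\<^sub>R y + a *\<^sub>R z - A' *\<^sub>R yp)"
      by (metis inner_scaleR_right)
    thus ?thesis unfolding A'_def by (simp add: inner_simps algebra_simps)
  qed
  have I2: "A*(norm (y-yp))\<^sup>2 + a*(norm (z-yp))\<^sup>2 = A'*(norm (w-yp))\<^sup>2 + A*a/A'*(norm (y-z))\<^sup>2"
    using L2[of A a yp y z] A'p unfolding A'_def w_def
    by (simp add: norm_minus_commute)
  define b1 where "b1 = mu*A*a/A'"
  define b2 where "b2 = 1 + mu*A"
  have b1: "b1 \<ge> 0" unfolding b1_def using mu A a A'p by simp
  have b2: "b2 > 0" unfolding b2_def using mu A by (simp add: add_pos_nonneg)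
  have bs: "b1 + b2 = a\<^sup>2/(l*A')"
  proof -
    have e1: "b1+b2 = (mu*A*a + (1+mu*A)*A')/A'"
      using A'p unfolding b1_def b2_def by (simp add: field_simps)
    have e2: "mu*A*a + (1+mu*A)*A' = a\<^sup>2/l"
      using rel l unfolding A'_def by (simp add: field_simps)
    show ?thesis unfolding e1 e2 by simp
  qed
  define c where "c = (1/(b1+b2)) *\<^sub>R (b1 *\<^sub>R y + b2 *\<^sub>R x)"
  have I3: "b1*(norm (z-y))\<^sup>2 + b2*(norm (z-x))\<^sup>2 \<ge> (b1+b2)*(norm (z-c))\<^sup>2"
    using L2[of b1 b2 z y x] b1 b2 unfolding c_def
    by (simp add: add_nonneg_nonneg)
  define c1 where "c1 = (a - mu*A*l)/A'"
  have c1e: "b2/(b1+b2) = c1*A'/a"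
  proof -
    have e1: "b2/(b1+b2) = b2*l*A'/a\<^sup>2" unfolding bs using a l A'p by (simp add: field_simps)
    have e2: "c1*A'/a = (a - mu*A*l)/a" unfolding c1_def using A'p by simp
    have e3: "b2*l*A' = a\<^sup>2 - mu*A*l*a" unfolding rel b2_def A'_def by (simp add: algebra_simps)
    show ?thesis unfolding e1 e2 e3 using a by (simp add: field_simps power2_eq_square)
  qed
  have c1e2: "b1/(b1+b2) = 1 - c1*A'/a"
    using c1e b1 b2 by (simp add: field_simps)
  have xt2: "xt = c1 *\<^sub>R x + (1 - c1) *\<^sub>R y"
    unfolding xt c1_def using A'p unfolding A'_def by (simp add: field_simps)
  have ceq: "c = (1 - c1*A'/a) *\<^sub>R y + (c1*A'/a) *\<^sub>R x"
  proof -
    have hb: "b1/(b1+b2) = 1 - b2/(b1+b2)" using b1 b2 by (simp add: field_simps)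
    show ?thesis unfolding c_def c1e2[symmetric] c1e[symmetric] using hb by (simp add: scaleR_right_distrib)
  qed
  have wx: "w - xt = (a/A') *\<^sub>R (z - c)"
  proof -
    have "(a/A') *\<^sub>R (z - c) = (a/A') *\<^sub>R z - (a/A' - c1) *\<^sub>R y - c1 *\<^sub>R x"
      unfolding ceq using a A'p by (simp add: algebra_simps)
    moreover have "w - xt = (a/A') *\<^sub>R z - (a/A' - c1) *\<^sub>R y - c1 *\<^sub>R x"
    proof -
      have hA: "A/A' = 1 - a/A'" using A'p unfolding A'_def by (simp add: field_simps)
      have hA': "(A / A') *\<^sub>R y + (a / A') *\<^sub>R y = y"
        using hA by (metis diff_add_cancel scaleR_left_distrib scaleR_one)
      show ?thesis unfolding w_def xt2 using A'p hA' by (simp add: algebra_simps)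
    qed
    ultimately show ?thesis by simp
  qed
  have I4: "(b1+b2)*(norm (z-c))\<^sup>2 = A'/l * (norm (w-xt))\<^sup>2"
  proof -
    have nn: "norm ((a/A') *\<^sub>R (z - c)) = a/A' * norm (z-c)" using a A'p by simp
    show ?thesis unfolding wx bs nn using a A'p l by (simp add: power_mult_distrib field_simps power2_eq_square)
  qed
  have Q: "eps \<le> inner v (w-yp) + mu/2 * (norm (w-yp))\<^sup>2 + 1/(2*l) * (norm ((w-yp) - (xt-yp)))\<^sup>2"
  proof (rule Qbound[OF l mu sig])
    have e1: "l *\<^sub>R v - (xt - yp) = l *\<^sub>R v + yp - xt" by (simp add: algebra_simps)
    have e2: "norm (xt - yp) = norm (yp - xt)" by (rule norm_minus_commute)
    show "(norm (l *\<^sub>R v - (xt - yp)))\<^sup>2 / (1 + l * mu) + 2 * l * eps \<le> sig\<^sup>2 * (norm (xt - yp))\<^sup>2"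
      unfolding e1 e2 using err .
  qed
  have Q': "eps \<le> inner v (w-yp) + mu/2 * (norm (w-yp))\<^sup>2 + 1/(2*l) * (norm (w-xt))\<^sup>2"
    using Q by simp
  have nyz: "norm (z-y) = norm (y-z)" by (simp add: norm_minus_commute)
  have "A*(inner v (y-yp) + mu/2*(norm (y-yp))\<^sup>2) + a*(inner v (z-yp) + mu/2*(norm (z-yp))\<^sup>2)
           + (1+mu*A)/2*(norm (z-x))\<^sup>2
      = A' * inner v (w - yp) + mu/2*(A*(norm (y-yp))\<^sup>2 + a*(norm (z-yp))\<^sup>2) + b2/2*(norm (z-x))\<^sup>2"
    using I1 unfolding b2_def by (simp add: algebra_simps)
  also have "\<dots> = A' * inner v (w - yp) + mu/2*A'*(norm (w-yp))\<^sup>2 + (b1*(norm (z-y))\<^sup>2 + b2*(norm (z-x))\<^sup>2)/2"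
    unfolding I2 b1_def nyz by (simp add: algebra_simps)
  also have "\<dots> \<ge> A' * inner v (w - yp) + mu/2*A'*(norm (w-yp))\<^sup>2 + A'/l * (norm (w-xt))\<^sup>2/2"
  proof -
    have "A'/l * (norm (w-xt))\<^sup>2 \<le> b1*(norm (z-y))\<^sup>2 + b2*(norm (z-x))\<^sup>2" using I3 I4 by linarith
    thus ?thesis by simp
  qed
  finally have "A' * inner v (w - yp) + mu/2*A'*(norm (w-yp))\<^sup>2 + A'/l * (norm (w-xt))\<^sup>2/2 \<le> A*(inner v (y-yp) + mu/2*(norm (y-yp))\<^sup>2) + a*(inner v (z-yp) + mu/2*(norm (z-yp))\<^sup>2)
           + (1+mu*A)/2*(norm (z-x))\<^sup>2" .
  moreover have "A' * eps \<le> A' * inner v (w - yp) + mu/2*A'*(norm (w-yp))\<^sup>2 + A'/l * (norm (w-xt))\<^sup>2/2"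
    using mult_left_mono[OF Q', of A'] A'p by (simp add: algebra_simps)
  ultimately show ?thesis unfolding A'_def by linarith
qed



lemma Gdecomp:
  fixes x yp v z xp :: "'a::real_inner"
  assumes mu: "mu > 0" and A: "A \<ge> 0" and a: "a > 0"
    and xp: "xp = ((1+mu*A)/(1+mu*(A+a))) *\<^sub>R x + (mu*a/(1+mu*(A+a))) *\<^sub>R yp - (a/(1+mu*(A+a))) *\<^sub>R v"
  shows "a*(inner v (z-yp) + mu/2*(norm (z-yp))\<^sup>2) + (1+mu*A)/2*(norm (z-x))\<^sup>2
       = a*(norm v)\<^sup>2 * (-1/(2*mu)) + (a*mu*(1+mu*A)/(1+mu*(A+a))*(norm ((yp - (1/mu) *\<^sub>R v) - x))\<^sup>2)/2
         + (1+mu*(A+a))/2*(norm (z-xp))\<^sup>2"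
proof -
  define q where "q = yp - (1/mu) *\<^sub>R v"
  define S where "S = 1+mu*(A+a)"
  have S: "S > 0" unfolding S_def using mu A a by (simp add: add_pos_nonneg)
  have h1: "inner v (z-yp) + mu/2*(norm (z-yp))\<^sup>2 = mu/2*(norm (z-q))\<^sup>2 - (norm v)\<^sup>2/(2*mu)"
    unfolding q_def power2_norm_eq_inner using mu
    by (simp add: inner_simps inner_commute algebra_simps power2_eq_square field_simps)
  have c: "(1/(a*mu + (1+mu*A))) *\<^sub>R ((a*mu) *\<^sub>R q + (1+mu*A) *\<^sub>R x) = xp"
    unfolding xp q_def using mu S unfolding S_def
    by (simp add: algebra_simps scaleR_right_diff_distrib divide_inverse)
  have L: "(a*mu)*(norm (z-q))\<^sup>2 + (1+mu*A)*(norm (z-x))\<^sup>2 = S*(norm (z-xp))\<^sup>2 + a*mu*(1+mu*A)/S*(norm (q-x))\<^sup>2"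
    using L2[of "a*mu" "1+mu*A" z q x] S unfolding c S_def by (simp add: algebra_simps)
  have "a*(inner v (z-yp) + mu/2*(norm (z-yp))\<^sup>2) + (1+mu*A)/2*(norm (z-x))\<^sup>2
     = ((a*mu)*(norm (z-q))\<^sup>2 + (1+mu*A)*(norm (z-x))\<^sup>2)/2 - a*(norm v)\<^sup>2/(2*mu)"
    unfolding h1 by (simp add: algebra_simps)
  also have "\<dots> = (S*(norm (z-xp))\<^sup>2 + a*mu*(1+mu*A)/S*(norm (q-x))\<^sup>2)/2 - a*(norm v)\<^sup>2/(2*mu)"
    unfolding L ..
  finally show ?thesis unfolding q_def[symmetric] S_def[symmetric] using S mu by (simp add: field_simps)
qed

lemma key:
  fixes xs x y yp v xt xp :: "'a::real_inner"
  assumes mu: "mu > 0" and l: "l > 0" and A: "A \<ge> 0" and a: "a > 0"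
    and rel: "a\<^sup>2 = l * ((1 + mu*A)*(A+a) + mu*A*a)"
    and sig: "0 \<le> sig" "sig \<le> 1"
    and xt: "xt = ((a - mu*A*l)/(A+a)) *\<^sub>R x + ((A + mu*A*l)/(A+a)) *\<^sub>R y"
    and err: "(norm (l *\<^sub>R v + yp - xt))\<^sup>2 / (1 + l * mu) + 2 * l * eps \<le> sig\<^sup>2 * (norm (yp - xt))\<^sup>2"
    and xp: "xp = ((1+mu*A)/(1+mu*(A+a))) *\<^sub>R x + (mu*a/(1+mu*(A+a))) *\<^sub>R yp - (a/(1+mu*(A+a))) *\<^sub>R v"
  shows "(1+mu*(A+a))/2*(norm (xs-xp))\<^sup>2 + (A+a)*eps \<le>
     A*(inner v (y-yp) + mu/2*(norm (y-yp))\<^sup>2) + a*(inner v (xs-yp) + mu/2*(norm (xs-yp))\<^sup>2)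
           + (1+mu*A)/2*(norm (xs-x))\<^sup>2"
proof -
  have T: "(A+a) * eps \<le> A*(inner v (y-yp) + mu/2*(norm (y-yp))\<^sup>2) + a*(inner v (xp-yp) + mu/2*(norm (xp-yp))\<^sup>2)
           + (1+mu*A)/2*(norm (xp-x))\<^sup>2"
    by (rule Tlower[OF mu l A a rel sig xt err])
  show ?thesis using T Gdecomp[OF mu A a xp, of xs] Gdecomp[OF mu A a xp, of xp]
    by simp
qed


lemma limit_le:
  fixes c d e :: real
  assumes h: "\<And>t. 0 < t \<Longrightarrow> t \<le> 1 \<Longrightarrow> c \<le> d + t * e"
  shows "c \<le> d"
proof (cases "e \<le> 0")
  case True
  then show ?thesis using h[of 1] by simp
next
  case False
  show ?thesis
  proof (rule ccontr)
    assume "\<not> c \<le> d"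
    define t where "t = min 1 ((c-d)/(2*e))"
    have t0: "0 < t" unfolding t_def using False \<open>\<not> c \<le> d\<close> by simp
    have t1: "t \<le> 1" unfolding t_def by simp
    have "t * e \<le> (c-d)/(2*e) * e" unfolding t_def using False by (intro mult_right_mono) auto
    also have "\<dots> = (c-d)/2" using False by simp
    finally have "t * e \<le> (c-d)/2" .
    thus False using h[OF t0 t1] \<open>\<not> c \<le> d\<close> by argo
  qed
qed

lemma subdiff_finite:
  assumes "proper_fun f" "u \<in> eps_subdiff f e y"
  shows "f y = ereal (real_of_ereal (f y))"
proof -
  obtain w where w: "f w \<noteq> \<infinity>" using assms(1) unfolding proper_fun_def by auto
  have ny: "f y \<noteq> -\<infinity>" using assms(1) unfolding proper_fun_def by auto
  have "f w \<ge> f y + ereal (inner u (w - y)) - ereal e" using assms(2) unfolding eps_subdiff_def by auto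
  hence "f y \<noteq> \<infinity>" using w by auto
  thus ?thesis using ny by (cases "f y") auto
qed

lemma eps_subgrad:
  assumes "u \<in> eps_subdiff f e y" "f y = ereal fy" "f z = ereal fz"
  shows "fy + inner u (z - y) - e \<le> fz"
proof -
  have "f z \<ge> f y + ereal (inner u (z - y)) - ereal e" using assms(1) unfolding eps_subdiff_def by auto
  thus ?thesis using assms(2,3) by simp
qed

lemma sc_subgrad:
  fixes g :: "'a::real_inner \<Rightarrow> ereal"
  assumes sc: "strongly_convex_fun mu g" and w: "w \<in> subdiff g y"
    and gy: "g y = ereal gy" and gz: "g z = ereal gz"
  shows "gy + inner w (z-y) + mu/2*(norm (z-y))\<^sup>2 \<le> gz"
proof (rule limit_le)
  fix t :: real assume t0: "0 < t" and t1: "t \<le> 1"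
  define p where "p = t *\<^sub>R z + (1 - t) *\<^sub>R y"
  define N where "N = (norm (z-y))\<^sup>2"
  have "g p \<le> ereal t * g z + ereal (1 - t) * g y - ereal (mu / 2 * t * (1 - t) * N)"
    using sc t0 t1 unfolding strongly_convex_fun_def p_def N_def by auto
  hence up: "g p \<le> ereal (t * gz + (1-t) * gy - mu / 2 * t * (1 - t) * N)"
    using gy gz by simp
  have "g p \<ge> g y + ereal (inner w (p - y)) - ereal 0"
    using w unfolding subdiff_def eps_subdiff_def by auto
  moreover have "p - y = t *\<^sub>R (z - y)" unfolding p_def by (simp add: algebra_simps)
  ultimately have lo: "g p \<ge> ereal (gy + t * inner w (z - y))" using gy by simp
  from order_trans[OF lo up] have
    "gy + t * inner w (z - y) \<le> t * gz + (1-t) * gy - mu / 2 * t * (1 - t) * N" by simp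
  hence "t * (gy + inner w (z-y) + mu/2*N) \<le> t * (gz + t * (mu/2*N))"
    by (simp add: algebra_simps add_divide_distrib diff_divide_distrib)
  hence "gy + inner w (z-y) + mu/2*N \<le> gz + t * (mu/2*N)"
    using t0 by simp
  thus "gy + inner w (z-y) + mu/2*(norm (z-y))\<^sup>2 \<le> gz + t * (mu/2*(norm (z-y))\<^sup>2)"
    unfolding N_def .
qed

lemma growth:
  fixes f g :: "'a::real_inner \<Rightarrow> ereal"
  assumes fc: "convex_fun f" and sc: "strongly_convex_fun mu g"
    and mn: "\<forall>z. f xs + g xs \<le> f z + g z"
    and fs: "f xs = ereal fs" and gs: "g xs = ereal gs"
    and fy: "f y = ereal fy" and gy: "g y = ereal gy"
  shows "mu/2*(norm (y - xs))\<^sup>2 \<le> (fy + gy) - (fs + gs)"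
proof -
  define N where "N = (norm (y-xs))\<^sup>2"
  have "mu/2*N \<le> (fy + gy) - (fs + gs)"
  proof (rule limit_le)
    fix t :: real assume t0: "0 < t" and t1: "t \<le> 1"
    define p where "p = t *\<^sub>R y + (1 - t) *\<^sub>R xs"
    have "f p \<le> ereal t * f y + ereal (1 - t) * f xs"
      using fc t0 t1 unfolding convex_fun_def p_def by auto
    hence u1: "f p \<le> ereal (t * fy + (1-t) * fs)" using fy fs by simp
    have "g p \<le> ereal t * g y + ereal (1 - t) * g xs - ereal (mu / 2 * t * (1 - t) * N)"
      using sc t0 t1 unfolding strongly_convex_fun_def p_def N_def by auto
    hence u2: "g p \<le> ereal (t * gy + (1-t) * gs - mu / 2 * t * (1 - t) * N)"
      using gy gs by simp
    have "f p + g p \<le> ereal (t * fy + (1-t) * fs) + ereal (t * gy + (1-t) * gs - mu / 2 * t * (1 - t) * N)"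
      using add_mono[OF u1 u2] .
    moreover have "ereal (fs + gs) \<le> f p + g p" using mn fs gs by (metis plus_ereal.simps(1))
    ultimately have "fs + gs \<le> (t * fy + (1-t) * fs) + (t * gy + (1-t) * gs - mu / 2 * t * (1 - t) * N)"
      by (metis order_trans plus_ereal.simps(1) ereal_less_eq(3))
    hence "t * (mu/2*N) \<le> t * ((fy + gy) - (fs + gs) + t * (mu/2*N))"
      by (simp add: algebra_simps add_divide_distrib diff_divide_distrib)
    thus "mu/2*N \<le> (fy + gy) - (fs + gs) + t * (mu/2*N)" using t0 by simp
  qed
  thus ?thesis unfolding N_def .
qed



lemma sq_bound:
  fixes u :: "'a::real_normed_vector"
  assumes "(norm u)\<^sup>2 \<le> d0\<^sup>2 * R / (m)" "d0 \<ge> 0" "R \<ge> 0" "m > 0"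
  shows "norm u \<le> d0 / sqrt m * sqrt R"
proof -
  have "norm u = sqrt ((norm u)\<^sup>2)" by simp
  also have "\<dots> \<le> sqrt (d0\<^sup>2 * R / m)" using assms(1) by (rule real_sqrt_le_mono)
  also have "\<dots> = d0 / sqrt m * sqrt R" using assms(2-4) by (simp add: real_sqrt_mult real_sqrt_divide)
  finally show ?thesis .
qed

lemma powr_sqrt:
  assumes "0 < r" "k \<ge> 1"
  shows "r powr ((real k - 1)/2) = sqrt (r ^ (k-1))"
proof -
  have e: "(real k - 1)/2 = real (k-1) * (1/2)" using assms(2) by (simp add: of_nat_diff)
  have "r powr ((real k - 1)/2) = (r powr real (k-1)) powr (1/2)"
    unfolding e by (rule powr_powr[symmetric])
  also have "r powr real (k-1) = r ^ (k-1)" using assms(1) by (rule powr_realpow)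
  also have "(r ^ (k-1)) powr (1/2) = sqrt (r ^ (k-1))" using assms(1) by (intro powr_half_sqrt) simp
  finally show ?thesis .
qed

lemma mono_lam:
  assumes "lam > 0" "l \<ge> lam" "mu > 0" "sig \<ge> 0"
  shows "(1 + sig * sqrt (1 + l*mu))/l \<le> (1 + sig * sqrt (1 + mu*lam))/lam"
proof -
  have l0: "l > 0" using assms by simp
  have e: "\<And>t. t > 0 \<Longrightarrow> sqrt (1 + t*mu)/t = sqrt (1/t\<^sup>2 + mu/t)"
  proof -
    fix t :: real assume t: "t > 0"
    have "1/t\<^sup>2 + mu/t = (1+t*mu)/t\<^sup>2" using t by (simp add: field_simps power2_eq_square)
    thus "sqrt (1 + t*mu)/t = sqrt (1/t\<^sup>2 + mu/t)" using t by (simp add: real_sqrt_divide)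
  qed
  have "lam\<^sup>2 \<le> l\<^sup>2" using assms by (intro power_mono) auto
  hence "1/l\<^sup>2 \<le> 1/lam\<^sup>2" using assms by (intro divide_left_mono) auto
  moreover have "mu/l \<le> mu/lam" using assms by (intro divide_left_mono) auto
  moreover have il: "1/l \<le> 1/lam" using assms by (intro divide_left_mono) auto
  ultimately have "sqrt (1/l\<^sup>2 + mu/l) \<le> sqrt (1/lam\<^sup>2 + mu/lam)" by simp
  hence s: "sqrt (1 + l*mu)/l \<le> sqrt (1 + lam*mu)/lam" using e[OF l0] e[OF assms(1)] by simp
  have "(1 + sig * sqrt (1 + l*mu))/l = 1/l + sig * (sqrt (1 + l*mu)/l)" by (simp add: add_divide_distrib)
  also have "\<dots> \<le> 1/lam + sig * (sqrt (1 + lam*mu)/lam)"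
    using s assms il by (intro add_mono mult_left_mono) auto
  also have "\<dots> = (1 + sig * sqrt (1 + mu*lam))/lam" by (simp add: add_divide_distrib mult.commute)
  finally show ?thesis .
qed

lemma lam32: "lam > 0 \<Longrightarrow> lam powr (3/2) = lam * sqrt lam"
proof -
  assume "lam > 0"
  have "lam powr (3/2) = lam powr (1 + 1/2)" by simp
  also have "\<dots> = lam * lam powr (1/2)" using powr_add[of lam 1 "1/2"] \<open>lam > 0\<close> by simp
  also have "\<dots> = lam * sqrt lam" using \<open>lam > 0\<close> by (simp add: powr_half_sqrt)
  finally show ?thesis .
qed



theorem theorem2p9:
  fixes f g :: "'a::euclidean_space \<Rightarrow> ereal"
    and \<mu> \<sigma> lam :: real and xstar :: 'a
    and lambda a A \<epsilon> :: "nat \<Rightarrow> real"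
    and x y v xt :: "nat \<Rightarrow> 'a"
  assumes f: "proper_fun f" "closed_fun f" "convex_fun f"
    and g: "proper_fun g" "closed_fun g" "convex_fun g"
    and mu: "\<mu> > 0" and gsc: "strongly_convex_fun \<mu> g"
    and dom: "\<exists>z. f z + g z \<noteq> \<infinity>"
    and xstar: "\<forall>z. f xstar + g xstar \<le> f z + g z"
    and sigma: "0 \<le> \<sigma>" "\<sigma> \<le> 1"
    and A0: "A 0 = 0"
    and lampos: "\<forall>k. lambda (Suc k) > 0"
    and a_def: "\<forall>k. a (Suc k) =
        ((1 + 2 * \<mu> * A k) * lambda (Suc k)
          + sqrt (((1 + 2 * \<mu> * A k))\<^sup>2 * (lambda (Suc k))\<^sup>2
                  + 4 * (1 + \<mu> * A k) * A k * lambda (Suc k))) / 2"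
    and xt_def: "\<forall>k. xt k =
        ((a (Suc k) - \<mu> * A k * lambda (Suc k)) / (A k + a (Suc k))) *\<^sub>R x k
        + ((A k + \<mu> * A k * lambda (Suc k)) / (A k + a (Suc k))) *\<^sub>R y k"
    and eps_nn: "\<forall>k. \<epsilon> (Suc k) \<ge> 0"
    and incl: "\<forall>k. \<exists>u w. u \<in> eps_subdiff f (\<epsilon> (Suc k)) (y (Suc k))
                        \<and> w \<in> subdiff g (y (Suc k)) \<and> v (Suc k) = u + w"
    and err: "\<forall>k. (norm (lambda (Suc k) *\<^sub>R v (Suc k) + y (Suc k) - xt k))\<^sup>2
                    / (1 + lambda (Suc k) * \<mu>)
                  + 2 * lambda (Suc k) * \<epsilon> (Suc k)
                \<le> \<sigma>\<^sup>2 * (norm (y (Suc k) - xt k))\<^sup>2"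
    and A_def: "\<forall>k. A (Suc k) = A k + a (Suc k)"
    and x_def: "\<forall>k. x (Suc k) =
        ((1 + \<mu> * A k) / (1 + \<mu> * A (Suc k))) *\<^sub>R x k
        + (\<mu> * a (Suc k) / (1 + \<mu> * A (Suc k))) *\<^sub>R y (Suc k)
        - (a (Suc k) / (1 + \<mu> * A (Suc k))) *\<^sub>R v (Suc k)"
    and lam: "lam > 0" "\<forall>k\<ge>1. lambda k \<ge> lam"
  shows "let d0 = norm (xstar - x 0);
             \<alpha> = sqrt (\<mu> * lam / (1 + \<mu> * lam))
         in (\<forall>k\<ge>1.
               (f (y k) + g (y k)) - (f xstar + g xstar)
                 \<le> ereal (d0\<^sup>2 / (2 * lam) * (1 - \<alpha>) ^ (k - 1))
             \<and> max (norm (xstar - y k)) (norm (xstar - x k))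
                 \<le> d0 / sqrt (\<mu> * lam) * (1 - \<alpha>) powr ((real k - 1) / 2))
          \<and> (\<forall>k\<ge>1.
               (\<exists>u w. u \<in> eps_subdiff f (\<epsilon> (Suc k)) (y (Suc k))
                      \<and> w \<in> subdiff g (y (Suc k)) \<and> v (Suc k) = u + w)
             \<and> norm (v (Suc k))
                 \<le> sqrt 6 * (1 + \<sigma> * sqrt (1 + \<mu> * lam)) / (sqrt \<mu> * lam powr (3/2))
                    * d0 * (1 - \<alpha>) powr ((real k - 1) / 2)
             \<and> \<epsilon> (Suc k) \<le> 3 * \<sigma>\<^sup>2 * d0\<^sup>2 / (\<mu> * lam\<^sup>2) * (1 - \<alpha>) ^ (k - 1))"
proof -
  define d0 where "d0 = norm (xstar - x 0)"
  define al where "al = sqrt (\<mu> * lam / (1 + \<mu> * lam))"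
  define Fr where "Fr = (\<lambda>z. real_of_ereal (f z))"
  define Gr where "Gr = (\<lambda>z. real_of_ereal (g z))"
  define H where "H = (\<lambda>z. Fr z + Gr z)"
  define hs where "hs = H xstar"
  have nf: "\<And>w. f w \<noteq> -\<infinity>" "\<And>w. g w \<noteq> -\<infinity>"
    using f(1) g(1) unfolding proper_fun_def by auto
  have fxs: "f xstar = ereal (Fr xstar)" and gxs: "g xstar = ereal (Gr xstar)"
  proof -
    obtain z where z: "f z + g z \<noteq> \<infinity>" using dom by auto
    have "f xstar + g xstar \<noteq> \<infinity>"
      using xstar[rule_format, of z] z by auto
    thus "f xstar = ereal (Fr xstar)" "g xstar = ereal (Gr xstar)"
      using nf[of xstar] unfolding Fr_def Gr_def
      by (cases "f xstar"; cases "g xstar"; auto)+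
  qed
  have fin: "\<And>k. f (y (Suc k)) = ereal (Fr (y (Suc k))) \<and> g (y (Suc k)) = ereal (Gr (y (Suc k)))"
  proof -
    fix k
    obtain u w where u: "u \<in> eps_subdiff f (\<epsilon> (Suc k)) (y (Suc k))"
        and w: "w \<in> subdiff g (y (Suc k))" using incl by blast
    have w': "w \<in> eps_subdiff g 0 (y (Suc k))" using w unfolding subdiff_def .
    show "f (y (Suc k)) = ereal (Fr (y (Suc k))) \<and> g (y (Suc k)) = ereal (Gr (y (Suc k)))"
      using subdiff_finite[OF f(1) u] subdiff_finite[OF g(1) w'] unfolding Fr_def Gr_def by simp
  qed
  have gamma: "\<And>k z. f z = ereal (Fr z) \<Longrightarrow> g z = ereal (Gr z) \<Longrightarrow>
      H (y (Suc k)) + inner (v (Suc k)) (z - y (Suc k)) - \<epsilon> (Suc k) + \<mu>/2*(norm (z - y (Suc k)))\<^sup>2 \<le> H z"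
  proof -
    fix k z assume fz: "f z = ereal (Fr z)" and gz: "g z = ereal (Gr z)"
    obtain u w where u: "u \<in> eps_subdiff f (\<epsilon> (Suc k)) (y (Suc k))"
        and w: "w \<in> subdiff g (y (Suc k))" and vuw: "v (Suc k) = u + w" using incl by blast
    have e1: "Fr (y (Suc k)) + inner u (z - y (Suc k)) - \<epsilon> (Suc k) \<le> Fr z"
      using eps_subgrad[OF u _ fz] fin[of k] by blast
    have e2: "Gr (y (Suc k)) + inner w (z - y (Suc k)) + \<mu>/2*(norm (z - y (Suc k)))\<^sup>2 \<le> Gr z"
      using sc_subgrad[OF gsc w _ gz] fin[of k] by blast
    show "H (y (Suc k)) + inner (v (Suc k)) (z - y (Suc k)) - \<epsilon> (Suc k) + \<mu>/2*(norm (z - y (Suc k)))\<^sup>2 \<le> H z"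
      using e1 e2 unfolding H_def vuw inner_add_left by linarith
  qed
  have abound: "\<And>k. A k \<ge> 0 \<Longrightarrow> a (Suc k) \<ge> (1 + 2*\<mu>*A k) * lambda (Suc k)"
  proof -
    fix k assume Ak: "A k \<ge> 0"
    define B where "B = (1 + 2*\<mu>*A k) * lambda (Suc k)"
    have B0: "B \<ge> 0" unfolding B_def using Ak mu lampos[rule_format, of k] by (intro mult_nonneg_nonneg) auto
    have C0: "4 * (1 + \<mu> * A k) * A k * lambda (Suc k) \<ge> 0" using Ak mu lampos[rule_format, of k] by (intro mult_nonneg_nonneg) auto
    define Sq where "Sq = sqrt (((1 + 2 * \<mu> * A k))\<^sup>2 * (lambda (Suc k))\<^sup>2 + 4 * (1 + \<mu> * A k) * A k * lambda (Suc k))"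
    have aS: "a (Suc k) = (B + Sq)/2" using a_def[rule_format, of k] unfolding B_def Sq_def .
    have "B = sqrt (B\<^sup>2)" using B0 by simp
    also have "\<dots> \<le> sqrt (((1 + 2 * \<mu> * A k))\<^sup>2 * (lambda (Suc k))\<^sup>2 + 4 * (1 + \<mu> * A k) * A k * lambda (Suc k))"
      using C0 unfolding B_def by (intro real_sqrt_le_mono) (simp add: power_mult_distrib)
    finally have "B \<le> sqrt (((1 + 2 * \<mu> * A k))\<^sup>2 * (lambda (Suc k))\<^sup>2 + 4 * (1 + \<mu> * A k) * A k * lambda (Suc k))" .
    hence "B \<le> Sq" unfolding Sq_def .
    thus "a (Suc k) \<ge> (1 + 2*\<mu>*A k) * lambda (Suc k)"
      unfolding B_def[symmetric] aS using \<open>B \<le> Sq\<close> by simp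
  qed
  have Apos: "\<And>k. A k \<ge> 0"
  proof -
    fix k show "A k \<ge> 0"
    proof (induction k)
      case 0 then show ?case using A0 by simp
    next
      case (Suc k)
      have "(1 + 2*\<mu>*A k) * lambda (Suc k) \<ge> 0" using Suc mu lampos[rule_format, of k] by (intro mult_nonneg_nonneg) auto
      then show ?case using abound[OF Suc] A_def Suc by (metis add_nonneg_nonneg order_trans)
    qed
  qed
  have apos: "\<And>k. a (Suc k) > 0"
  proof -
    fix k
    have "(1 + 2*\<mu>*A k) * lambda (Suc k) > 0" using Apos[of k] mu lampos[rule_format, of k]
      by (intro mult_pos_pos) (auto simp: add_pos_nonneg)
    thus "a (Suc k) > 0" using abound[OF Apos[of k]] by linarith
  qed
  have rel: "\<And>k. (a (Suc k))\<^sup>2 = lambda (Suc k) * ((1 + \<mu>*A k)*(A k + a (Suc k)) + \<mu>*A k*a (Suc k))"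
  proof -
    fix k
    define B where "B = (1 + 2*\<mu>*A k) * lambda (Suc k)"
    define C where "C = (1 + \<mu> * A k) * A k * lambda (Suc k)"
    define s where "s = sqrt (B\<^sup>2 + 4*C)"
    have C0: "C \<ge> 0" unfolding C_def using Apos[of k] mu lampos[rule_format, of k] by (intro mult_nonneg_nonneg) auto
    have s2: "s * s = B * B + 4 * C" unfolding s_def using C0
      by (simp add: power2_eq_square[symmetric])
    have ae: "a (Suc k) = (B + s)/2"
      using a_def[rule_format, of k] unfolding B_def C_def s_def
      by (simp add: power_mult_distrib mult.assoc)
    show "(a (Suc k))\<^sup>2 = lambda (Suc k) * ((1 + \<mu>*A k)*(A k + a (Suc k)) + \<mu>*A k*a (Suc k))"
    proof -
      have "((B+s)/2)\<^sup>2 - lambda (Suc k) * ((1 + \<mu>*A k)*(A k + (B+s)/2) + \<mu>*A k*((B+s)/2))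
            = (s * s - (B*B + 4*C))/4"
        unfolding B_def C_def by (simp add: field_simps power2_eq_square)
      also have "\<dots> = 0" using s2 by simp
      finally show ?thesis unfolding ae by simp
    qed
  qed
  have lam_k: "\<And>k. lambda (Suc k) \<ge> lam" using lam(2) by simp
  have al_rng: "0 \<le> al" "al < 1"
  proof -
    show "0 \<le> al" unfolding al_def using mu lam by simp
    have p: "\<mu> * lam > 0" using mu lam(1) by simp
    have "\<mu> * lam / (1 + \<mu> * lam) < 1" using p by (simp add: divide_less_eq)
    thus "al < 1" unfolding al_def by simp
  qed
  have grow: "\<And>k. A k \<le> (1 - al) * A (Suc k)"
  proof -
    fix k
    define l where "l = lambda (Suc k)"
    define A' where "A' = A (Suc k)"
    define aa where "aa = a (Suc k)"
    have l0: "l > 0" unfolding l_def using lampos by simp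
    have A'e: "A' = A k + aa" unfolding A'_def aa_def using A_def by simp
    have A'p: "A' > 0" using A'e Apos[of k] apos[of k] unfolding aa_def by simp
    have eq: "aa\<^sup>2 * (1 + l*\<mu>) = l*A' + l*\<mu>*A'\<^sup>2"
    proof -
      have h: "aa\<^sup>2 - l * ((1 + \<mu>*A k)*(A k + aa) + \<mu>*A k*aa) = 0"
        using rel[of k] unfolding aa_def[symmetric] l_def[symmetric] by simp
      have "aa\<^sup>2 * (1 + l*\<mu>) - (l*A' + l*\<mu>*A'\<^sup>2) = (aa\<^sup>2 - l * ((1 + \<mu>*A k)*(A k + aa) + \<mu>*A k*aa))"
        unfolding A'e by (simp add: algebra_simps power2_eq_square)
      thus ?thesis using h by simp
    qed
    have lp1: "1 + l*\<mu> > 0" using l0 mu by (simp add: add_pos_pos)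
    have "(aa/A')\<^sup>2 = aa\<^sup>2 * (1 + l*\<mu>)/((1 + l*\<mu>)*A'\<^sup>2)"
      using lp1 by (simp add: power_divide)
    also have "\<dots> = (l*A' + l*\<mu>*A'\<^sup>2)/((1 + l*\<mu>)*A'\<^sup>2)" unfolding eq ..
    also have "\<dots> \<ge> (l*\<mu>*A'\<^sup>2)/((1 + l*\<mu>)*A'\<^sup>2)"
      using A'p l0 mu by (intro divide_right_mono) (auto simp: add_pos_pos)
    finally have t1: "(aa/A')\<^sup>2 \<ge> l*\<mu>/(1 + l*\<mu>)" using A'p by simp
    have t2: "\<mu> * lam / (1 + \<mu> * lam) \<le> l*\<mu>/(1 + l*\<mu>)"
    proof -
      have "\<mu>*lam \<le> \<mu>*l" using lam_k[of k] mu unfolding l_def by simp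
      thus ?thesis using mu lam l0 by (simp add: field_simps add_pos_pos)
    qed
    have "al \<le> sqrt ((aa/A')\<^sup>2)" unfolding al_def using t1 t2 by (intro real_sqrt_le_mono) linarith
    also have "\<dots> = aa/A'" using A'p apos[of k] unfolding aa_def by simp
    finally have "al * A' \<le> aa" using A'p by (simp add: field_simps)
    thus "A k \<le> (1 - al) * A (Suc k)" unfolding A'_def[symmetric] using A'e by (simp add: algebra_simps)
  qed
  have Agr: "\<And>k. k \<ge> 1 \<Longrightarrow> lam \<le> A k * (1-al)^(k-1)"
  proof -
    fix k :: nat assume "k \<ge> 1"
    thus "lam \<le> A k * (1-al)^(k-1)"
    proof (induction k rule: nat_induct_at_least)
      case base
      have "A 1 = a 1" using A_def[rule_format, of 0] A0 by simp
      moreover have "a 1 \<ge> lambda 1" using abound[of 0] A0 by simp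
      moreover have "lambda 1 \<ge> lam" using lam by simp
      ultimately show ?case by simp
    next
      case (Suc n)
      have "A n * (1-al)^(n-1) \<le> (1 - al) * A (Suc n) * (1-al)^(n-1)"
        using grow[of n] al_rng by (intro mult_right_mono) auto
      also have "\<dots> = A (Suc n) * (1-al)^(Suc n - 1)"
        using Suc(1) by (cases n) auto
      finally show ?case using Suc by linarith
    qed
  qed
  define Phi where "Phi = (\<lambda>k. A k * (H (y k) - hs) + (1 + \<mu> * A k)/2 * (norm (xstar - x k))\<^sup>2)"
  have fxs': "f xstar = ereal (Fr xstar)" "g xstar = ereal (Gr xstar)" using fxs gxs by auto
  have step: "\<And>k. Phi (Suc k) \<le> Phi k"
  proof -
    fix k
    define yp where "yp = y (Suc k)"
    define vp where "vp = v (Suc k)"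
    define ep where "ep = \<epsilon> (Suc k)"
    define l where "l = lambda (Suc k)"
    define aa where "aa = a (Suc k)"
    define Ak where "Ak = A k"
    define PY where "PY = inner vp (y k - yp) + \<mu>/2*(norm (y k - yp))\<^sup>2"
    define QX where "QX = inner vp (xstar - yp) + \<mu>/2*(norm (xstar - yp))\<^sup>2"
    have xp: "x (Suc k) = ((1+\<mu>*Ak)/(1+\<mu>*(Ak+aa))) *\<^sub>R x k + (\<mu>*aa/(1+\<mu>*(Ak+aa))) *\<^sub>R yp - (aa/(1+\<mu>*(Ak+aa))) *\<^sub>R vp"
      using x_def[rule_format, of k] A_def[rule_format, of k] unfolding Ak_def aa_def yp_def vp_def by simp
    have K: "(1+\<mu>*(Ak+aa))/2*(norm (xstar - x (Suc k)))\<^sup>2 + (Ak+aa)*ep \<le>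
     Ak*PY + aa*QX + (1+\<mu>*Ak)/2*(norm (xstar - x k))\<^sup>2"
    proof -
      have l0: "l > 0" unfolding l_def using lampos by simp
      have A0': "Ak \<ge> 0" unfolding Ak_def by (rule Apos)
      have a0': "aa > 0" unfolding aa_def by (rule apos)
      have rel': "aa\<^sup>2 = l * ((1 + \<mu>*Ak)*(Ak+aa) + \<mu>*Ak*aa)"
        unfolding aa_def l_def Ak_def by (rule rel)
      have xt': "xt k = ((aa - \<mu>*Ak*l)/(Ak+aa)) *\<^sub>R x k + ((Ak + \<mu>*Ak*l)/(Ak+aa)) *\<^sub>R y k"
        using xt_def[rule_format, of k] unfolding aa_def l_def Ak_def .
      have err': "(norm (l *\<^sub>R vp + yp - xt k))\<^sup>2 / (1 + l * \<mu>) + 2 * l * ep \<le> \<sigma>\<^sup>2 * (norm (yp - xt k))\<^sup>2"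
        using err[rule_format, of k] unfolding l_def vp_def yp_def ep_def .
      show ?thesis unfolding PY_def QX_def
        by (rule key[OF mu l0 A0' a0' rel' sigma xt' err' xp])
    qed
    have gx: "H yp + QX - ep \<le> hs"
      using gamma[OF fxs'] unfolding hs_def QX_def yp_def vp_def ep_def by (simp add: algebra_simps)
    have gxa: "aa * H yp + aa * QX - aa * ep \<le> aa * hs"
      using mult_left_mono[OF gx, of aa] apos[of k] unfolding aa_def by (simp add: algebra_simps)
    have gya: "Ak * H yp + Ak * PY - Ak * ep \<le> Ak * H (y k)"
    proof (cases k)
      case 0 then show ?thesis unfolding Ak_def using A0 by simp
    next
      case (Suc j)
      have gy: "H yp + PY - ep \<le> H (y k)"
        using gamma[of "y k" k] fin[of j] unfolding Suc PY_def yp_def vp_def ep_def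
        by (simp add: algebra_simps)
      show ?thesis using mult_left_mono[OF gy, of Ak] Apos[of k] unfolding Ak_def
        by (simp add: algebra_simps)
    qed
    have fin_ineq: "Ak * H yp + aa * H yp - Ak * hs - aa * hs + (1+\<mu>*(Ak+aa))/2*(norm (xstar - x (Suc k)))\<^sup>2
        \<le> Ak * H (y k) - Ak * hs + (1+\<mu>*Ak)/2*(norm (xstar - x k))\<^sup>2"
      using K gxa gya by (simp add: algebra_simps)
    have e1: "Phi (Suc k) = Ak * H yp + aa * H yp - Ak * hs - aa * hs + (1+\<mu>*(Ak+aa))/2*(norm (xstar - x (Suc k)))\<^sup>2"
      unfolding Phi_def using A_def[rule_format, of k] unfolding Ak_def aa_def yp_def by (simp add: algebra_simps)
    have e2: "Phi k = Ak * H (y k) - Ak * hs + (1+\<mu>*Ak)/2*(norm (xstar - x k))\<^sup>2"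
      unfolding Phi_def Ak_def by (simp add: algebra_simps)
    show "Phi (Suc k) \<le> Phi k" unfolding e1 e2 by (rule fin_ineq)
  qed
  have Phib: "\<And>k. Phi k \<le> d0\<^sup>2/2"
  proof -
    fix k show "Phi k \<le> d0\<^sup>2/2"
    proof (induction k)
      case 0 show ?case unfolding Phi_def d0_def using A0 by simp
    next
      case (Suc k) then show ?case using step[of k] by linarith
    qed
  qed
  have al1: "1 - al > 0" using al_rng by simp
  define R where "R = (\<lambda>k::nat. (1 - al)^(k-1))"
  have R0: "\<And>k. R k > 0" unfolding R_def using al1 by simp
  have ml: "\<mu>*lam > 0" using mu lam(1) by simp
  have d00: "d0 \<ge> 0" unfolding d0_def by simp
  have partA: "\<And>k. k \<ge> 1 \<Longrightarrow>
       H (y k) - hs \<le> d0\<^sup>2/(2*lam) * R k \<and>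
       (norm (xstar - y k))\<^sup>2 \<le> d0\<^sup>2 * R k / (\<mu>*lam) \<and>
       (norm (xstar - x k))\<^sup>2 \<le> d0\<^sup>2 * R k / (\<mu>*lam)"
  proof -
    fix k :: nat assume k1: "k \<ge> 1"
    then obtain j where kj: "k = Suc j" by (cases k) auto
    have fy: "f (y k) = ereal (Fr (y k))" "g (y k) = ereal (Gr (y k))" using fin[of j] kj by auto
    have gr: "\<mu>/2*(norm (y k - xstar))\<^sup>2 \<le> H (y k) - hs"
      using growth[OF f(3) gsc xstar fxs gxs fy] unfolding H_def hs_def by simp
    have "\<mu>/2*(norm (y k - xstar))\<^sup>2 \<ge> 0" using mu by simp
    hence hpos: "H (y k) - hs \<ge> 0" using gr by linarith
    have P: "Phi k \<le> d0\<^sup>2/2" by (rule Phib)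
    have AR: "lam \<le> A k * R k" using Agr[OF k1] unfolding R_def .
    have Ak0: "A k \<ge> 0" by (rule Apos)
    have q1: "(1 + \<mu>*A k)/2*(norm (xstar - x k))\<^sup>2 \<ge> 0" using mu Ak0 by simp
    have q2: "A k * (H (y k) - hs) \<ge> 0" using Ak0 hpos by simp
    have t1: "A k * (H (y k) - hs) \<le> d0\<^sup>2/2" using P q1 unfolding Phi_def by simp
    have t2: "(1 + \<mu>*A k)/2*(norm (xstar - x k))\<^sup>2 \<le> d0\<^sup>2/2" using P q2 unfolding Phi_def by simp
    have "(H (y k) - hs) * lam \<le> (H (y k) - hs) * (A k * R k)" using mult_left_mono[OF AR hpos] .
    also have "\<dots> = (A k * (H (y k) - hs)) * R k" by simp
    also have "\<dots> \<le> d0\<^sup>2/2 * R k" using mult_right_mono[OF t1] R0[of k] by simp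
    finally have "(H (y k) - hs) * lam \<le> d0\<^sup>2/2 * R k" .
    hence fv: "H (y k) - hs \<le> d0\<^sup>2/(2*lam) * R k" using lam(1) by (simp add: field_simps)
    have ny: "(norm (xstar - y k))\<^sup>2 \<le> d0\<^sup>2 * R k / (\<mu>*lam)"
    proof -
      have "\<mu>/2*(norm (xstar - y k))\<^sup>2 \<le> d0\<^sup>2/(2*lam) * R k" using gr fv by (simp add: norm_minus_commute)
      thus ?thesis using mu lam(1) by (simp add: field_simps)
    qed
    have nx: "(norm (xstar - x k))\<^sup>2 \<le> d0\<^sup>2 * R k / (\<mu>*lam)"
    proof -
      define Nx where "Nx = (norm (xstar - x k))\<^sup>2"
      have Nx0: "Nx \<ge> 0" unfolding Nx_def by simp
      have "\<mu>*A k*Nx \<le> (1 + \<mu>*A k)*Nx" using Nx0 by (simp add: algebra_simps)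
      also have "\<dots> \<le> d0\<^sup>2" using t2 unfolding Nx_def by simp
      finally have a1: "\<mu>*A k*Nx \<le> d0\<^sup>2" .
      have "\<mu>*lam*Nx \<le> \<mu>*(A k * R k)*Nx" using AR mu Nx0 by (intro mult_right_mono mult_left_mono) auto
      also have "\<dots> = (\<mu>*A k*Nx) * R k" by simp
      also have "\<dots> \<le> d0\<^sup>2 * R k" using a1 R0[of k] by (intro mult_right_mono) auto
      finally have "\<mu>*lam*Nx \<le> d0\<^sup>2 * R k" .
      thus ?thesis unfolding Nx_def[symmetric] using ml by (simp add: field_simps)
    qed
    show "H (y k) - hs \<le> d0\<^sup>2/(2*lam) * R k \<and>
       (norm (xstar - y k))\<^sup>2 \<le> d0\<^sup>2 * R k / (\<mu>*lam) \<and>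
       (norm (xstar - x k))\<^sup>2 \<le> d0\<^sup>2 * R k / (\<mu>*lam)" using fv ny nx by blast
  qed
  define D where "D = d0 / sqrt (\<mu>*lam)"
  have D0: "D \<ge> 0" unfolding D_def using d00 ml by (intro divide_nonneg_nonneg) auto
  have bxy: "\<And>k. k \<ge> 1 \<Longrightarrow> norm (xstar - x k) \<le> D * sqrt (R k) \<and> norm (xstar - y k) \<le> D * sqrt (R k)"
  proof -
    fix k :: nat assume k1: "k \<ge> 1"
    have "norm (xstar - x k) \<le> d0 / sqrt (\<mu>*lam) * sqrt (R k)"
      using partA[OF k1] d00 R0[of k] ml by (intro sq_bound) auto
    moreover have "norm (xstar - y k) \<le> d0 / sqrt (\<mu>*lam) * sqrt (R k)"
      using partA[OF k1] d00 R0[of k] ml by (intro sq_bound) auto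
    ultimately show "norm (xstar - x k) \<le> D * sqrt (R k) \<and> norm (xstar - y k) \<le> D * sqrt (R k)"
      unfolding D_def by simp
  qed
  have partB: "\<And>k. k \<ge> 1 \<Longrightarrow>
      norm (v (Suc k)) \<le> sqrt 6 * (1 + \<sigma> * sqrt (1 + \<mu> * lam)) / (sqrt \<mu> * lam powr (3/2)) * d0 * sqrt (R k)
      \<and> \<epsilon> (Suc k) \<le> 3 * \<sigma>\<^sup>2 * d0\<^sup>2 / (\<mu> * lam\<^sup>2) * R k"
  proof -
    fix k :: nat assume k1: "k \<ge> 1"
    have RS: "R (Suc k) \<le> R k" unfolding R_def using al_rng k1
      by (simp add: power_decreasing)
    have by1: "norm (xstar - y (Suc k)) \<le> D * sqrt (R k)"
    proof -
      have "norm (xstar - y (Suc k)) \<le> D * sqrt (R (Suc k))" using bxy[of "Suc k"] by simp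
      also have "\<dots> \<le> D * sqrt (R k)" using RS D0 by (intro mult_left_mono) auto
      finally show ?thesis .
    qed
    define l where "l = lambda (Suc k)"
    define aa where "aa = a (Suc k)"
    define Ak where "Ak = A k"
    have l0: "l > 0" unfolding l_def using lampos by simp
    have llam: "l \<ge> lam" unfolding l_def using lam_k .
    have Ak0: "Ak \<ge> 0" unfolding Ak_def by (rule Apos)
    have aa0: "aa > 0" unfolding aa_def by (rule apos)
    have Ap: "Ak + aa > 0" using Ak0 aa0 by simp
    define c1 where "c1 = (aa - \<mu>*Ak*l)/(Ak+aa)"
    define c2 where "c2 = (Ak + \<mu>*Ak*l)/(Ak+aa)"
    have c1p: "c1 \<ge> 0"
    proof -
      have "aa \<ge> (1 + 2*\<mu>*Ak) * l" using abound[OF Ak0[unfolded Ak_def]] unfolding aa_def Ak_def l_def .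
      moreover have "(1 + 2*\<mu>*Ak) * l \<ge> \<mu>*Ak*l" using Ak0 mu l0 by (simp add: algebra_simps)
      ultimately show ?thesis unfolding c1_def using Ap by simp
    qed
    have c2p: "c2 \<ge> 0" unfolding c2_def using Ap Ak0 mu l0 by simp
    have c12: "c1 + c2 = 1" unfolding c1_def c2_def using Ap by (simp add: add_divide_distrib[symmetric])
    have xtk: "xt k = c1 *\<^sub>R x k + c2 *\<^sub>R y k"
      using xt_def[rule_format, of k] unfolding c1_def c2_def aa_def l_def Ak_def .
    have cs: "c1 *\<^sub>R xstar + c2 *\<^sub>R xstar = xstar" using c12 by (metis scaleR_add_left scaleR_one)
    have xte: "xt k - xstar = c1 *\<^sub>R (x k - xstar) + c2 *\<^sub>R (y k - xstar)"
      unfolding xtk using cs by (simp add: algebra_simps)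
    have nxt: "norm (xt k - xstar) \<le> D * sqrt (R k)"
    proof -
      have "norm (xt k - xstar) \<le> norm (c1 *\<^sub>R (x k - xstar)) + norm (c2 *\<^sub>R (y k - xstar))"
        unfolding xte by (rule norm_triangle_ineq)
      also have "\<dots> = c1 * norm (xstar - x k) + c2 * norm (xstar - y k)"
        using c1p c2p by (simp add: norm_minus_commute)
      also have "\<dots> \<le> c1 * (D * sqrt (R k)) + c2 * (D * sqrt (R k))"
        using bxy[OF k1] c1p c2p by (intro add_mono mult_left_mono) auto
      also have "\<dots> = (c1 + c2) * (D * sqrt (R k))" by (simp add: algebra_simps)
      also have "\<dots> = D * sqrt (R k)" using c12 by simp
      finally show ?thesis .
    qed
    define E where "E = norm (y (Suc k) - xt k)"
    have E0: "E \<ge> 0" unfolding E_def by simp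
    have Eb: "E \<le> 2 * D * sqrt (R k)"
    proof -
      have "E = norm ((y (Suc k) - xstar) - (xt k - xstar))" unfolding E_def by simp
      also have "\<dots> \<le> norm (y (Suc k) - xstar) + norm (xt k - xstar)" by (rule norm_triangle_ineq4)
      also have "\<dots> \<le> D * sqrt (R k) + D * sqrt (R k)"
        using by1 nxt by (simp add: norm_minus_commute)
      finally show ?thesis by simp
    qed
    define NN where "NN = (norm (l *\<^sub>R v (Suc k) + y (Suc k) - xt k))\<^sup>2"
    have errk: "NN / (1 + l * \<mu>) + 2 * l * \<epsilon> (Suc k) \<le> \<sigma>\<^sup>2 * E\<^sup>2"
      using err[rule_format, of k] unfolding NN_def E_def l_def .
    have ep0: "\<epsilon> (Suc k) \<ge> 0" using eps_nn by simp
    have lp1: "1 + l*\<mu> > 0" using l0 mu by (simp add: add_pos_pos)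
    have NN0: "NN \<ge> 0" unfolding NN_def by simp
    have e1: "NN \<le> \<sigma>\<^sup>2 * E\<^sup>2 * (1 + l*\<mu>)"
    proof -
      have "NN / (1 + l * \<mu>) \<le> \<sigma>\<^sup>2 * E\<^sup>2" using errk ep0 l0 by (smt (verit) mult_nonneg_nonneg)
      thus ?thesis using lp1 by (simp add: divide_le_eq mult.commute)
    qed
    have e2: "norm (l *\<^sub>R v (Suc k) + y (Suc k) - xt k) \<le> \<sigma> * sqrt (1 + l*\<mu>) * E"
    proof -
      have "norm (l *\<^sub>R v (Suc k) + y (Suc k) - xt k) = sqrt NN" unfolding NN_def by simp
      also have "\<dots> \<le> sqrt (\<sigma>\<^sup>2 * E\<^sup>2 * (1 + l*\<mu>))" using e1 by (rule real_sqrt_le_mono)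
      also have "\<dots> = \<sigma> * sqrt (1 + l*\<mu>) * E" using sigma E0 by (simp add: real_sqrt_mult)
      finally show ?thesis .
    qed
    have e3: "l * norm (v (Suc k)) \<le> (1 + \<sigma> * sqrt (1 + l*\<mu>)) * E"
    proof -
      have "l * norm (v (Suc k)) = norm ((l *\<^sub>R v (Suc k) + y (Suc k) - xt k) - (y (Suc k) - xt k))"
        using l0 by simp
      also have "\<dots> \<le> norm (l *\<^sub>R v (Suc k) + y (Suc k) - xt k) + norm (y (Suc k) - xt k)"
        by (rule norm_triangle_ineq4)
      also have "\<dots> \<le> \<sigma> * sqrt (1 + l*\<mu>) * E + E" using e2 unfolding E_def by simp
      finally show ?thesis by (simp add: algebra_simps)
    qed
    define s where "s = sqrt (1 + \<mu> * lam)"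
    have sgm: "(1 + \<sigma> * sqrt (1 + l*\<mu>))/l \<le> (1 + \<sigma> * s)/lam"
      unfolding s_def by (rule mono_lam[OF lam(1) llam mu sigma(1)])
    have spos: "(1 + \<sigma> * s)/lam \<ge> 0"
    proof -
      have "s \<ge> 0" unfolding s_def using ml by simp
      hence "1 + \<sigma> * s \<ge> 0" using sigma by (simp add: add_nonneg_nonneg)
      thus ?thesis using lam(1) by simp
    qed
    have e4: "norm (v (Suc k)) \<le> (1 + \<sigma> * s)/lam * (2 * D * sqrt (R k))"
    proof -
      have "norm (v (Suc k)) \<le> (1 + \<sigma> * sqrt (1 + l*\<mu>))/l * E"
        using e3 l0 by (simp add: field_simps)
      also have "\<dots> \<le> (1 + \<sigma> * s)/lam * E" using sgm E0 by (rule mult_right_mono)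
      also have "\<dots> \<le> (1 + \<sigma> * s)/lam * (2 * D * sqrt (R k))" using Eb spos by (rule mult_left_mono)
      finally show ?thesis .
    qed
    define KK where "KK = (1 + \<sigma> * s)/lam * D * sqrt (R k)"
    have KK0: "KK \<ge> 0" unfolding KK_def using spos D0 R0[of k] by (intro mult_nonneg_nonneg) auto
    have s6: "2 \<le> sqrt (6::real)" by (rule real_le_rsqrt) simp
    have tgt: "sqrt 6 * (1 + \<sigma> * s) / (sqrt \<mu> * lam powr (3/2)) * d0 * sqrt (R k) = sqrt 6 * KK"
      unfolding KK_def D_def lam32[OF lam(1)] using mu lam(1)
      by (simp add: real_sqrt_mult field_simps)
    have vb: "norm (v (Suc k)) \<le> sqrt 6 * (1 + \<sigma> * s) / (sqrt \<mu> * lam powr (3/2)) * d0 * sqrt (R k)"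
    proof -
      have "norm (v (Suc k)) \<le> 2 * KK" using e4 unfolding KK_def by (simp add: algebra_simps)
      also have "\<dots> \<le> sqrt 6 * KK" using s6 KK0 by (rule mult_right_mono)
      finally show ?thesis unfolding tgt .
    qed
    have eb: "\<epsilon> (Suc k) \<le> 3 * \<sigma>\<^sup>2 * d0\<^sup>2 / (\<mu> * lam\<^sup>2) * R k"
    proof -
      have E2: "E\<^sup>2 \<le> 4 * (d0\<^sup>2 / (\<mu>*lam)) * R k"
      proof -
        have "E\<^sup>2 \<le> (2 * D * sqrt (R k))\<^sup>2" using Eb E0 by (rule power_mono)
        also have "\<dots> = 4 * D\<^sup>2 * R k" using R0[of k] by (simp add: power_mult_distrib)
        also have "D\<^sup>2 = d0\<^sup>2 / (\<mu>*lam)" unfolding D_def using ml by (simp add: power_divide)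
        finally show ?thesis .
      qed
      have "2 * lam * \<epsilon> (Suc k) \<le> 2 * l * \<epsilon> (Suc k)" using llam ep0 by (simp add: mult_right_mono)
      also have "\<dots> \<le> \<sigma>\<^sup>2 * E\<^sup>2" using errk NN0 lp1 by (smt (verit) divide_nonneg_pos)
      also have "\<dots> \<le> \<sigma>\<^sup>2 * (4 * (d0\<^sup>2 / (\<mu>*lam)) * R k)" using E2 by (intro mult_left_mono) auto
      finally have "2 * lam * \<epsilon> (Suc k) \<le> \<sigma>\<^sup>2 * (4 * (d0\<^sup>2 / (\<mu>*lam)) * R k)" .
      hence "\<epsilon> (Suc k) \<le> 2 * \<sigma>\<^sup>2 * d0\<^sup>2 / (\<mu> * lam\<^sup>2) * R k"
        using lam(1) mu by (simp add: field_simps power2_eq_square)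
      also have "\<dots> \<le> 3 * \<sigma>\<^sup>2 * d0\<^sup>2 / (\<mu> * lam\<^sup>2) * R k"
        using R0[of k] mu lam(1) by (intro mult_right_mono divide_right_mono) auto
      finally show ?thesis .
    qed
    show "norm (v (Suc k)) \<le> sqrt 6 * (1 + \<sigma> * sqrt (1 + \<mu> * lam)) / (sqrt \<mu> * lam powr (3/2)) * d0 * sqrt (R k)
      \<and> \<epsilon> (Suc k) \<le> 3 * \<sigma>\<^sup>2 * d0\<^sup>2 / (\<mu> * lam\<^sup>2) * R k"
      using vb eb unfolding s_def by blast
  qed
  have A1: "\<And>k. k \<ge> 1 \<Longrightarrow> (f (y k) + g (y k)) - (f xstar + g xstar) \<le> ereal (d0\<^sup>2 / (2 * lam) * (1 - al) ^ (k - 1))"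
  proof -
    fix k :: nat assume k1: "k \<ge> 1"
    then obtain j where kj: "k = Suc j" by (cases k) auto
    have fy: "f (y k) = ereal (Fr (y k))" "g (y k) = ereal (Gr (y k))" using fin[of j] kj by auto
    have "(f (y k) + g (y k)) - (f xstar + g xstar) = ereal (H (y k) - hs)"
      unfolding fy fxs gxs H_def hs_def by simp
    thus "(f (y k) + g (y k)) - (f xstar + g xstar) \<le> ereal (d0\<^sup>2 / (2 * lam) * (1 - al) ^ (k - 1))"
      using partA[OF k1] unfolding R_def by simp
  qed
  have A2: "\<And>k. k \<ge> 1 \<Longrightarrow> max (norm (xstar - y k)) (norm (xstar - x k)) \<le> d0 / sqrt (\<mu> * lam) * (1 - al) powr ((real k - 1) / 2)"
  proof -
    fix k :: nat assume k1: "k \<ge> 1"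
    have pw: "(1 - al) powr ((real k - 1)/2) = sqrt (R k)" unfolding R_def by (rule powr_sqrt[OF al1 k1])
    show "max (norm (xstar - y k)) (norm (xstar - x k)) \<le> d0 / sqrt (\<mu> * lam) * (1 - al) powr ((real k - 1) / 2)"
      unfolding pw using bxy[OF k1] unfolding D_def by simp
  qed
  have B2: "\<And>k. k \<ge> 1 \<Longrightarrow> norm (v (Suc k)) \<le> sqrt 6 * (1 + \<sigma> * sqrt (1 + \<mu> * lam)) / (sqrt \<mu> * lam powr (3/2)) * d0 * (1 - al) powr ((real k - 1) / 2)"
  proof -
    fix k :: nat assume k1: "k \<ge> 1"
    have pw: "(1 - al) powr ((real k - 1)/2) = sqrt (R k)" unfolding R_def by (rule powr_sqrt[OF al1 k1])
    show "norm (v (Suc k)) \<le> sqrt 6 * (1 + \<sigma> * sqrt (1 + \<mu> * lam)) / (sqrt \<mu> * lam powr (3/2)) * d0 * (1 - al) powr ((real k - 1) / 2)"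
      unfolding pw using partB[OF k1] by simp
  qed
  have B3: "\<And>k. k \<ge> 1 \<Longrightarrow> \<epsilon> (Suc k) \<le> 3 * \<sigma>\<^sup>2 * d0\<^sup>2 / (\<mu> * lam\<^sup>2) * (1 - al) ^ (k - 1)"
    using partB unfolding R_def by simp
  show ?thesis unfolding Let_def d0_def[symmetric] al_def[symmetric]
    using A1 A2 B2 B3 incl by blast
qed


end
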